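(* Consider the average-cost Markov decision process (MDP) described in the context, with finite state space $\mathcal{S}$ of TAoI values, action set $\mathcal{A}=\{(0,0),(0,1),(1,0),(1,1)\}$, per-step cost $\bar{R}(\Delta,\mathbf{a})=\Delta+\tfrac{1}{2}(L(\mathbf{a})-1)$ and transition probabilities $\bar{p}$. Let $(V^{*},V)$ solve the Bellman equation $$V^{*}+V(s)=\min_{\mathbf{a}\in\mathcal{A}}\Big\{\bar{R}(s,\mathbf{a})+\sum_{s'\in\mathcal{S}}\bar{p}(s'|s,\mathbf{a})V(s')\Big\},\quad \forall s\in\mathcal{S}.$$ Then the value function $V(\Delta)$ is non-decreasing in $\Delta\in\mathcal{S}$.
   Context: Parameters: positive integers $T_1^u<T_2^u$ (transmission latencies, in time slots, of a low- and high-resolution image) and $T_1^c<T_2^c$ (inference latencies of a small and a large language model); success probabilities $p_s,q_s,p_l,q_l\in(0,1]$ associated with actions $(0,0),(1,0),(0,1),(1,1)$ respectively (action $\mathbf{a}=(a^u,a^c)$: $a^u=0/1$ low/high resolution, $a^c=0/1$ small/large model). The duration of action $\mathbf{a}$ is $L((0,0))=T_1^u+T_1^c$, $L((1,0))=T_2^u+T_1^c$, $L((0,1))=T_1^u+T_2^c$, $L((1,1))=T_2^u+T_2^c$. Write $P(\mathbf{a})$ for the success probability of $\mathbf{a}$. The state (task-oriented age of information, TAoI) $\Delta$ takes values in a finite set $\mathcal{S}$ of positive integers bounded by a finite upper limit $\hat{\Delta}$. In the original semi-Markov model, from state $\Delta$ under action $\mathbf{a}$ the next state is $L(\mathbf{a})$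 with probability $P(\mathbf{a})$ and $\min\{\Delta+L(\mathbf{a}),\hat{\Delta}\}$ with probability $1-P(\mathbf{a})$; denote these probabilities $p(s'|s,\mathbf{a})$. The equivalent discrete-time MDP has the same state and action spaces, cost $\bar{R}(\Delta,\mathbf{a})=\Delta+\tfrac12(L(\mathbf{a})-1)$, and transition probabilities $\bar{p}(s'|s,\mathbf{a})=\frac{\epsilon}{L(\mathbf{a})}p(s'|s,\mathbf{a})$ for $s'\neq s$ and $\bar{p}(s|s,\mathbf{a})=1-\frac{\epsilon}{L(\mathbf{a})}\big(1-p(s|s,\mathbf{a})\big)$, where $\epsilon\in(0,\min_{\mathbf{a}}L(\mathbf{a})]$ is fixed. *)

theory Defs
  imports Main "HOL.Real"
begin

definition actions :: "(nat \<times> nat) set" where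
  "actions = {(0,0), (0,1), (1,0), (1,1)}"

definition dur :: "nat \<Rightarrow> nat \<Rightarrow> nat \<Rightarrow> nat \<Rightarrow> nat \<times> nat \<Rightarrow> nat" where
  "dur T1u T2u T1c T2c a =
     (if fst a = 0 then T1u else T2u) + (if snd a = 0 then T1c else T2c)"

definition succ_prob :: "real \<Rightarrow> real \<Rightarrow> real \<Rightarrow> real \<Rightarrow> nat \<times> nat \<Rightarrow> real" where
  "succ_prob ps qs pl ql a =
     (if a = (0,0) then ps else if a = (1,0) then qs else if a = (0,1) then pl else ql)"

definition trans_p :: "(nat \<times> nat \<Rightarrow> nat) \<Rightarrow> (nat \<times> nat \<Rightarrow> real) \<Rightarrow> nat
    \<Rightarrow> nat \<Rightarrow> nat \<times> nat \<Rightarrow> nat \<Rightarrow> real" where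
  "trans_p L P Dhat s a s' =
     (if s' = L a then P a else 0) + (if s' = min (s + L a) Dhat then 1 - P a else 0)"

definition trans_pbar :: "(nat \<times> nat \<Rightarrow> nat) \<Rightarrow> (nat \<times> nat \<Rightarrow> real) \<Rightarrow> nat \<Rightarrow> real
    \<Rightarrow> nat \<Rightarrow> nat \<times> nat \<Rightarrow> nat \<Rightarrow> real" where
  "trans_pbar L P Dhat eps s a s' =
     (if s' \<noteq> s then eps / real (L a) * trans_p L P Dhat s a s'
      else 1 - eps / real (L a) * (1 - trans_p L P Dhat s a s))"

definition cost_bar :: "(nat \<times> nat \<Rightarrow> nat) \<Rightarrow> nat \<Rightarrow> nat \<times> nat \<Rightarrow> real" where
  "cost_bar L s a = real s + (real (L a) - 1) / 2"

end

theory Submission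
  imports Defs
begin

lemma sum_pbar:
  fixes V :: "nat \<Rightarrow> real"
  assumes fin: "finite S" and sS: "s \<in> S" and LS: "L a \<in> S" and mS: "min (s + L a) D \<in> S"
  shows "(\<Sum>s'\<in>S. trans_pbar L P D eps s a s' * V s') =
         V s + eps / real (L a) * (P a * V (L a) + (1 - P a) * V (min (s + L a) D) - V s)"
proof -
  define c where "c = eps / real (L a)"
  define m where "m = min (s + L a) D"
  have pt: "trans_pbar L P D eps s a s' * V s' =
      (if s' = s then V s else 0) + c * ((if s' = L a then P a * V (L a) else 0)
        + (if s' = m then (1 - P a) * V m else 0) - (if s' = s then V s else 0))" for s'
    by (simp add: trans_pbar_def trans_p_def c_def m_def algebra_simps)
  have "(\<Sum>s'\<in>S. trans_pbar L P D eps s a s' * V s') =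
      (\<Sum>s'\<in>S. (if s' = s then V s else 0)) + c * ((\<Sum>s'\<in>S. (if s' = L a then P a * V (L a) else 0))
        + (\<Sum>s'\<in>S. (if s' = m then (1 - P a) * V m else 0)) - (\<Sum>s'\<in>S. (if s' = s then V s else 0)))"
    unfolding pt by (simp add: sum.distrib sum_distrib_left sum_subtractf algebra_simps)
  also have "\<dots> = V s + c * (P a * V (L a) + (1 - P a) * V m - V s)"
    using fin sS LS mS by (simp add: m_def)
  finally show ?thesis by (simp add: c_def m_def)
qed

theorem lemma1:
  fixes T1u T2u T1c T2c Dhat :: nat
    and ps qs pl ql eps Vstar :: real
    and S :: "nat set"
    and V :: "nat \<Rightarrow> real"
  assumes "0 < T1u" "T1u < T2u" "0 < T1c" "T1c < T2c"
    and "0 < ps" "ps \<le> 1" "0 < qs" "qs \<le> 1" "0 < pl" "pl \<le> 1" "0 < ql" "ql \<le> 1"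
    and "finite S" "S \<subseteq> {1..Dhat}"
    and "\<forall>s\<in>S. \<forall>a\<in>actions. dur T1u T2u T1c T2c a \<in> S
                 \<and> min (s + dur T1u T2u T1c T2c a) Dhat \<in> S"
    and "0 < eps" "eps \<le> (MIN a\<in>actions. real (dur T1u T2u T1c T2c a))"
    and "\<forall>s\<in>S. Vstar + V s =
           (MIN a\<in>actions. cost_bar (dur T1u T2u T1c T2c) s a
              + (\<Sum>s'\<in>S. trans_pbar (dur T1u T2u T1c T2c) (succ_prob ps qs pl ql) Dhat eps s a s'
                           * V s'))"
  shows "\<forall>s\<in>S. \<forall>t\<in>S. s \<le> t \<longrightarrow> V s \<le> V t"
proof -
  define L where "L = dur T1u T2u T1c T2c"
  define P where "P = succ_prob ps qs pl ql"
  define m where "m = (\<lambda>s a. min (s + L a) Dhat)"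
  define c where "c = (\<lambda>a. eps / real (L a))"
  define Q where "Q = (\<lambda>s a. cost_bar L s a + (V s + c a * (P a * V (L a) + (1 - P a) * V (m s a) - V s)))"
  have finA: "finite actions" and neA: "actions \<noteq> {}" by (auto simp: actions_def)
  have Lpos: "L a > 0" for a using assms(1-4) by (simp add: L_def dur_def)
  have Ppos: "P a > 0" "P a \<le> 1" for a using assms(5-12) by (auto simp: P_def succ_prob_def)
  have cpos: "c a > 0" for a using Lpos[of a] assms(16) by (simp add: c_def)
  have Bell: "Vstar + V s = Min (Q s ` actions)" if "s \<in> S" for s
  proof -
    have "Vstar + V s = (MIN a\<in>actions. cost_bar L s a
              + (\<Sum>s'\<in>S. trans_pbar L P Dhat eps s a s' * V s'))"
      using assms(18) that by (simp add: L_def P_def)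
    also have "\<dots> = Min (Q s ` actions)"
      apply (rule arg_cong[where f=Min])
      apply (rule image_cong[OF refl])
      using assms(15) that sum_pbar[OF assms(13) that]
      by (simp add: Q_def L_def m_def c_def)
    finally show ?thesis .
  qed
  have le: "Vstar + V s \<le> Q s a" if "s \<in> S" "a \<in> actions" for s a
    using Bell[OF that(1)] finA that(2) by simp
  have att: "\<exists>a\<in>actions. Vstar + V s = Q s a" if "s \<in> S" for s
  proof -
    have "Min (Q s ` actions) \<in> Q s ` actions" using finA neA by (intro Min_in) auto
    then show ?thesis using Bell[OF that] by auto
  qed
  have mS: "m s a \<in> S" if "s \<in> S" "a \<in> actions" for s a
    using assms(15) that by (simp add: m_def L_def)
  show ?thesis
  proof (cases "S = {}")
    case True then show ?thesis by simp
  next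
    case False
    define D where "D = {V s - V t | s t. s \<in> S \<and> t \<in> S \<and> s \<le> t}"
    have Deq: "D = (\<lambda>(s,t). V s - V t) ` {(s,t). (s,t) \<in> S \<times> S \<and> s \<le> t}"
      unfolding D_def by auto
    have finD: "finite D" unfolding Deq
      by (rule finite_imageI, rule finite_subset[of _ "S \<times> S"]) (use assms(13) in auto)
    obtain s0 where "s0 \<in> S" using False by auto
    then have "V s0 - V s0 \<in> D" unfolding D_def by blast
    then have neD: "D \<noteq> {}" by auto
    define d where "d = Max D"
    have dge: "V s - V t \<le> d" if "s \<in> S" "t \<in> S" "s \<le> t" for s t
      unfolding d_def using finD that by (intro Max_ge) (auto simp: D_def)
    obtain s t where st: "s \<in> S" "t \<in> S" "s \<le> t" "d = V s - V t"
      using Max_in[OF finD neD] unfolding d_def D_def by auto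
    obtain a where a: "a \<in> actions" "Vstar + V t = Q t a" using att[OF st(2)] by blast
    have h1: "Vstar + V s \<le> Q s a" using le[OF st(1) a(1)] .
    have mle: "m s a \<le> m t a" using st(3) by (simp add: m_def)
    have h2: "V (m s a) - V (m t a) \<le> d" using dge[OF mS[OF st(1) a(1)] mS[OF st(2) a(1)] mle] .
    have "V s - V t \<le> Q s a - Q t a" using h1 a(2) by linarith
    then have "c a * (V s - V t) \<le> (real s - real t) + c a * (1 - P a) * (V (m s a) - V (m t a))"
      by (simp add: Q_def cost_bar_def algebra_simps)
    also have "\<dots> \<le> c a * (1 - P a) * d"
    proof -
      have "c a * (1 - P a) * (V (m s a) - V (m t a)) \<le> c a * (1 - P a) * d"
        using h2 cpos[of a] Ppos[of a] by (intro mult_left_mono) auto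
      then show ?thesis using st(3) by simp
    qed
    finally have "c a * d \<le> c a * (1 - P a) * d" using st(4) by simp
    then have "d \<le> (1 - P a) * d" using cpos[of a] by (simp add: mult.assoc)
    then have "P a * d \<le> 0" by (simp add: algebra_simps)
    then have "d \<le> 0" using Ppos(1)[of a] by (simp add: mult_le_0_iff)
    show ?thesis
    proof (intro ballI impI)
      fix x y assume "x \<in> S" "y \<in> S" "x \<le> y"
      then show "V x \<le> V y" using dge[of x y] \<open>d \<le> 0\<close> by simp
    qed
  qed
qed

end
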